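(* Let $n\ge3$ and equip $\mathcal{H}_n$ with the word metric for the generating set $\{g_1,\dots,g_{n-1}\}$. For $k\in\mathbb{N}$ let $B_k$ be the ball of radius $k$ about the identity, $C_k$ the set of elements of $\mathcal{H}_n$ of complexity exactly $k$, and $D_k\subseteq C_k$ the set of elements of $C_k$ of word length at most $k\log_{2n-2}k$. Then $$\lim_{k\to\infty}\frac{|D_k|}{|C_k|}=0.$$
   Context: Let $\mathbb{N}=\{1,2,3,\dots\}$, $\mathbb{Z}_n$ the integers modulo $n$, $R_n=\mathbb{Z}_n\times\mathbb{N}$ (ray $i$ is $\{(i,k):k\in\mathbb{N}\}$). Permutations act on the right. The Houghton group $\mathcal{H}_n$ is the group of permutations $\sigma$ of $R_n$ for which there exist $N\ge0$ and integers $t_i(\sigma)$ with $(i,k)\sigma=(i,k+t_i(\sigma))$ for all $i\in\mathbb{Z}_n$, $k\ge N$. For distinct $i,j$, $g_{ij}\in\mathcal{H}_n$ is given by $(i,m)g_{ij}=(i,m-1)$ for $m>1$, $(i,1)g_{ij}=(j,1)$, $(j,m)g_{ij}=(j,m+1)$ for $m\ge1$, fixing all points on other rays; $g_i=g_{i\,i+1}$. For $\sigma\in\mathcal{H}_n$ and $i\in\mathbb{Z}_n$, $p_i(\sigma)$ is the largest integer $k\ge1$ with $(i,k)\sigma\ne(i,k+t_i(\sigma))$ (automatically true if $k+t_i(\sigma)\le0$), and $0$ if no such $k$ exists; the complexity is $P(\sigma)=\sum_i p_i(\sigma)$. *)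

theory Defs
  imports Complex_Main
begin

text \<open>Points of R_n: pairs (i,k) with i < n (ray index, representing Z_n) and k \<ge> 1.
  Permutations of R_n are represented as functions on nat \<times> nat that are
  the identity outside R_n. Permutations act on the right: the image of x
  under \<sigma> is written \<sigma> x, and the product \<sigma>\<tau> (first \<sigma>, then \<tau>) is \<tau> \<circ> \<sigma>.\<close>

definition rays :: "nat \<Rightarrow> (nat \<times> nat) set" where
  "rays n = {(i, k). i < n \<and> 1 \<le> k}"

definition houghton :: "nat \<Rightarrow> (nat \<times> nat \<Rightarrow> nat \<times> nat) set" where
  "houghton n = {\<sigma>. bij_betw \<sigma> (rays n) (rays n) \<and> (\<forall>x. x \<notin> rays n \<longrightarrow> \<sigma> x = x) \<and>
     (\<exists>N::nat. \<exists>t::nat \<Rightarrow> int. \<forall>i<n. \<forall>k. N \<le> k \<and> 1 \<le> k \<longrightarrow>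
        1 \<le> int k + t i \<and> \<sigma> (i, k) = (i, nat (int k + t i)))}"

text \<open>The translation amount t_i(\<sigma>) (unique for \<sigma> in the Houghton group).\<close>
definition transl :: "(nat \<times> nat \<Rightarrow> nat \<times> nat) \<Rightarrow> nat \<Rightarrow> int" where
  "transl \<sigma> i = (THE t. \<exists>N::nat. \<forall>k. N \<le> k \<and> 1 \<le> k \<longrightarrow>
        1 \<le> int k + t \<and> \<sigma> (i, k) = (i, nat (int k + t)))"

definition defect :: "(nat \<times> nat \<Rightarrow> nat \<times> nat) \<Rightarrow> nat \<Rightarrow> nat \<Rightarrow> bool" where
  "defect \<sigma> i k = (int k + transl \<sigma> i \<le> 0 \<or> \<sigma> (i, k) \<noteq> (i, nat (int k + transl \<sigma> i)))"

definition pcomp :: "(nat \<times> nat \<Rightarrow> nat \<times> nat) \<Rightarrow> nat \<Rightarrow> nat" where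
  "pcomp \<sigma> i = (if \<exists>k\<ge>1. defect \<sigma> i k then Max {k. 1 \<le> k \<and> defect \<sigma> i k} else 0)"

definition complexity :: "nat \<Rightarrow> (nat \<times> nat \<Rightarrow> nat \<times> nat) \<Rightarrow> nat" where
  "complexity n \<sigma> = (\<Sum>i<n. pcomp \<sigma> i)"

definition gij :: "nat \<Rightarrow> nat \<Rightarrow> nat \<times> nat \<Rightarrow> nat \<times> nat" where
  "gij i j = (\<lambda>(a, m). if a = i \<and> m > 1 then (i, m - 1)
                       else if a = i \<and> m = 1 then (j, 1)
                       else if a = j \<and> m \<ge> 1 then (j, m + 1)
                       else (a, m))"

definition gens :: "nat \<Rightarrow> (nat \<times> nat \<Rightarrow> nat \<times> nat) set" where
  "gens n = {gij i ((i + 1) mod n) | i. 1 \<le> i \<and> i \<le> n - 1}"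

definition sym_gens :: "nat \<Rightarrow> (nat \<times> nat \<Rightarrow> nat \<times> nat) set" where
  "sym_gens n = gens n \<union> inv ` gens n"

text \<open>Evaluation of a word (right action: first letter acts first).\<close>
definition word_eval :: "(nat \<times> nat \<Rightarrow> nat \<times> nat) list \<Rightarrow> nat \<times> nat \<Rightarrow> nat \<times> nat" where
  "word_eval ws = fold (\<lambda>s acc. s \<circ> acc) ws id"

definition word_length :: "nat \<Rightarrow> (nat \<times> nat \<Rightarrow> nat \<times> nat) \<Rightarrow> nat" where
  "word_length n \<sigma> = (LEAST m. \<exists>ws. length ws = m \<and> set ws \<subseteq> sym_gens n \<and> word_eval ws = \<sigma>)"

definition ball :: "nat \<Rightarrow> nat \<Rightarrow> (nat \<times> nat \<Rightarrow> nat \<times> nat) set" where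
  "ball n k = {\<sigma> \<in> houghton n. word_length n \<sigma> \<le> k}"

definition Cset :: "nat \<Rightarrow> nat \<Rightarrow> (nat \<times> nat \<Rightarrow> nat \<times> nat) set" where
  "Cset n k = {\<sigma> \<in> houghton n. complexity n \<sigma> = k}"

definition Dset :: "nat \<Rightarrow> nat \<Rightarrow> (nat \<times> nat \<Rightarrow> nat \<times> nat) set" where
  "Dset n k = {\<sigma> \<in> Cset n k. real (word_length n \<sigma>) \<le> real k * log (real (2 * n - 2)) (real k)}"

end

theory Submission
  imports Defs "HOL-Combinatorics.Permutations"
begin


lemma gij_simp:
  "gij i j (a, m) = (if a = i \<and> m > 1 then (i, m - 1)
                       else if a = i \<and> m = 1 then (j, 1)
                       else if a = j \<and> m \<ge> 1 then (j, m + 1)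
                       else (a, m))"
  by (simp add: gij_def)

lemma gij_inv: "i \<noteq> j \<Longrightarrow> gij j i \<circ> gij i j = id"
  by (auto simp: gij_simp fun_eq_iff)

lemma gij_comp: "i \<noteq> j \<Longrightarrow> j \<noteq> k \<Longrightarrow> i \<noteq> k \<Longrightarrow> gij j k \<circ> gij i j = gij i k"
  by (auto simp: gij_simp fun_eq_iff)

lemma gij_swap: "a \<noteq> b \<Longrightarrow> b \<noteq> c \<Longrightarrow> a \<noteq> c \<Longrightarrow>
   gij c b \<circ> gij b a \<circ> gij a c = Transposition.transpose (a,1) (b,1)"
  apply (rule ext)
  subgoal for x
    apply (cases x)
    apply (simp add: Transposition.transpose_def)
    apply (simp add: gij_simp split: if_splits)
    apply auto
    done
  done



lemma gij_pow_j: "i \<noteq> j \<Longrightarrow> 1 \<le> k \<Longrightarrow> (gij i j ^^ m) (j,k) = (j, k+m)"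
  by (induction m) (auto simp: gij_simp)

lemma gij_pow_i: "i \<noteq> j \<Longrightarrow> m < k \<Longrightarrow> (gij i j ^^ m) (i,k) = (i, k-m)"
  by (induction m) (auto simp: gij_simp)

lemma gij_pow_other: "a \<noteq> i \<Longrightarrow> a \<noteq> j \<Longrightarrow> (gij i j ^^ m) (a,k) = (a,k)"
  by (induction m) (auto simp: gij_simp)

lemma gij_pow_inv: "i \<noteq> j \<Longrightarrow> (gij j i ^^ m) \<circ> (gij i j ^^ m) = id"
proof (induction m)
  case (Suc m)
  have e1: "gij j i ^^ Suc m = (gij j i ^^ m) \<circ> gij j i" by (rule funpow_Suc_right)
  have e2: "gij i j ^^ Suc m = gij i j \<circ> (gij i j ^^ m)" by simp
  have "(gij j i ^^ Suc m) \<circ> (gij i j ^^ Suc m) = (gij j i ^^ m) \<circ> (gij j i \<circ> gij i j) \<circ> (gij i j ^^ m)"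
    unfolding e1 e2 by (simp add: o_assoc)
  also have "\<dots> = (gij j i ^^ m) \<circ> (gij i j ^^ m)" using gij_inv[OF Suc.prems] by simp
  also have "\<dots> = id" using Suc.IH[OF Suc.prems] .
  finally show ?case .
qed simp

lemma fold_comp: "fold (\<lambda>s acc. s \<circ> acc) ws (acc :: nat \<times> nat \<Rightarrow> nat \<times> nat) = word_eval ws \<circ> acc"
  unfolding word_eval_def
proof (induction ws arbitrary: acc)
  case (Cons a ws)
  show ?case using Cons[of "a \<circ> acc"] Cons[of "a \<circ> id"] by (simp add: o_assoc)
qed simp

lemma word_eval_Nil[simp]: "word_eval [] = id" by (simp add: word_eval_def)
lemma word_eval_Cons[simp]: "word_eval (s # ws) = word_eval ws \<circ> s"
  by (subst word_eval_def) (simp add: fold_comp)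
lemma word_eval_append[simp]: "word_eval (xs @ ys) = word_eval ys \<circ> word_eval xs"
  by (induction xs) (auto simp: o_assoc)

definition GG :: "nat \<Rightarrow> (nat \<times> nat \<Rightarrow> nat \<times> nat) set" where
  "GG n = {f. \<exists>ws. set ws \<subseteq> sym_gens n \<and> word_eval ws = f}"

lemma GG_id: "id \<in> GG n" unfolding GG_def by (rule CollectI, rule exI[of _ "[]"]) simp

lemma GG_comp: "f \<in> GG n \<Longrightarrow> g \<in> GG n \<Longrightarrow> g \<circ> f \<in> GG n"
proof -
  assume "f \<in> GG n" "g \<in> GG n"
  then obtain ws vs where "set ws \<subseteq> sym_gens n" "word_eval ws = f" "set vs \<subseteq> sym_gens n" "word_eval vs = g"
    by (auto simp: GG_def)
  then show ?thesis unfolding GG_def by (auto intro!: exI[of _ "ws @ vs"])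
qed

lemma GG_gen: "s \<in> sym_gens n \<Longrightarrow> s \<in> GG n"
  unfolding GG_def by (auto intro!: exI[of _ "[s]"])

lemma GG_pow: "f \<in> GG n \<Longrightarrow> f ^^ m \<in> GG n"
  by (induction m) (auto simp: GG_id GG_comp)

lemma inv_gij: "i \<noteq> j \<Longrightarrow> inv (gij i j) = gij j i"
  by (rule inv_unique_comp) (auto simp: gij_inv)

lemma sym_gens_iff:
  assumes "n \<ge> 3"
  shows "s \<in> sym_gens n \<longleftrightarrow> (\<exists>i. 1 \<le> i \<and> i \<le> n - 1 \<and> (s = gij i ((i+1) mod n) \<or> s = gij ((i+1) mod n) i))"
proof -
  have ne: "1 \<le> i \<Longrightarrow> i \<le> n - 1 \<Longrightarrow> i \<noteq> (i+1) mod n" for i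
    using assms by (cases "i + 1 < n") (auto simp: mod_if)
  show ?thesis
  proof
    assume "s \<in> sym_gens n"
    then show "\<exists>i. 1 \<le> i \<and> i \<le> n - 1 \<and> (s = gij i ((i+1) mod n) \<or> s = gij ((i+1) mod n) i)"
      unfolding sym_gens_def gens_def using ne by (auto simp: inv_gij)
  next
    assume "\<exists>i. 1 \<le> i \<and> i \<le> n - 1 \<and> (s = gij i ((i+1) mod n) \<or> s = gij ((i+1) mod n) i)"
    then obtain i where i: "1 \<le> i" "i \<le> n - 1" "s = gij i ((i+1) mod n) \<or> s = gij ((i+1) mod n) i" by blast
    have g: "gij i ((i+1) mod n) \<in> gens n" unfolding gens_def using i by blast
    have "gij ((i+1) mod n) i = inv (gij i ((i+1) mod n))" using ne[OF i(1,2)] by (simp add: inv_gij)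
    then have "gij ((i+1) mod n) i \<in> inv ` gens n" using g by blast
    then show "s \<in> sym_gens n" using i(3) g unfolding sym_gens_def by blast
  qed
qed

lemma sym_gens_inverse:
  assumes "n \<ge> 3" "s \<in> sym_gens n"
  shows "\<exists>s'\<in>sym_gens n. s' \<circ> s = id \<and> s \<circ> s' = id"
proof -
  have ne: "1 \<le> i \<Longrightarrow> i \<le> n - 1 \<Longrightarrow> i \<noteq> (i+1) mod n" for i
    using assms by (cases "i + 1 < n") (auto simp: mod_if)
  from assms obtain i where i: "1 \<le> i" "i \<le> n - 1" and
    s: "s = gij i ((i+1) mod n) \<or> s = gij ((i+1) mod n) i"
    by (auto simp: sym_gens_iff)
  show ?thesis
  proof (cases "s = gij i ((i+1) mod n)")
    case True
    then show ?thesis using i ne[OF i] assms(1)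
      by (intro bexI[of _ "gij ((i+1) mod n) i"]) (auto simp: sym_gens_iff gij_inv)
  next
    case False
    then show ?thesis using i s ne[OF i] assms(1)
      by (intro bexI[of _ "gij i ((i+1) mod n)"]) (auto simp: sym_gens_iff gij_inv)
  qed
qed

lemma GG_inv:
  assumes "n \<ge> 3" "f \<in> GG n"
  shows "\<exists>g\<in>GG n. g \<circ> f = id \<and> f \<circ> g = id"
proof -
  obtain ws where ws: "set ws \<subseteq> sym_gens n" "word_eval ws = f" using assms(2) by (auto simp: GG_def)
  have "\<exists>g\<in>GG n. g \<circ> word_eval ws = id \<and> word_eval ws \<circ> g = id" using ws(1)
  proof (induction ws)
    case Nil then show ?case using GG_id by (intro bexI[of _ id]) auto
  next
    case (Cons s ws)
    have "set ws \<subseteq> sym_gens n" using Cons.prems by simp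
    then obtain g where g: "g \<in> GG n" "g \<circ> word_eval ws = id" "word_eval ws \<circ> g = id" using Cons.IH by blast
    obtain s' where s': "s' \<in> sym_gens n" "s' \<circ> s = id" "s \<circ> s' = id"
      using sym_gens_inverse[OF assms(1)] Cons.prems by auto
    have e1: "(s' \<circ> g) \<circ> (word_eval ws \<circ> s) = id"
    proof -
      have "(s' \<circ> g) \<circ> (word_eval ws \<circ> s) = s' \<circ> (g \<circ> word_eval ws) \<circ> s" by (simp only: o_assoc)
      then show ?thesis using g(3) s'(2) by (simp add: g(2))
    qed
    have e2: "(word_eval ws \<circ> s) \<circ> (s' \<circ> g) = id"
    proof -
      have "(word_eval ws \<circ> s) \<circ> (s' \<circ> g) = word_eval ws \<circ> (s \<circ> s') \<circ> g" by (simp only: o_assoc)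
      then show ?thesis using g(3) s'(3) by simp
    qed
    have "s' \<circ> g \<in> GG n" using GG_comp GG_gen g(1) s'(1) by blast
    then show ?case unfolding word_eval_Cons using e1 e2 by blast
  qed
  then show ?thesis using ws by simp
qed

definition rayp :: "nat \<Rightarrow> nat \<Rightarrow> nat" where "rayp n p = (p + 1) mod n"

lemma rayp_eq: "p < n \<Longrightarrow> rayp n p = (if p + 1 = n then 0 else p + 1)"
  unfolding rayp_def by (simp add: mod_if)

lemma gij_GG_path:
  assumes "n \<ge> 3"
  shows "0 < d \<Longrightarrow> p + d < n \<Longrightarrow> gij (rayp n p) (rayp n (p+d)) \<in> GG n \<and> gij (rayp n (p+d)) (rayp n p) \<in> GG n"
proof (induction d)
  case 0 then show ?case by simp
next
  case (Suc d)
  have inj: "a < n \<Longrightarrow> b < n \<Longrightarrow> a \<noteq> b \<Longrightarrow> rayp n a \<noteq> rayp n b" for a b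
    by (simp add: rayp_eq)
  have base: "gij (rayp n q) (rayp n (q+1)) \<in> GG n \<and> gij (rayp n (q+1)) (rayp n q) \<in> GG n" if "q + 1 < n" for q
  proof -
    have "rayp n q = q + 1" using that by (simp add: rayp_eq)
    moreover have "rayp n (q+1) = (q + 1 + 1) mod n" by (simp only: rayp_def)
    moreover have "gij (Suc q) (Suc (Suc q) mod n) \<in> sym_gens n"
      unfolding sym_gens_iff[OF assms] using that by (intro exI[of _ "Suc q"]) auto
    moreover have "gij (Suc (Suc q) mod n) (Suc q) \<in> sym_gens n"
      unfolding sym_gens_iff[OF assms] using that by (intro exI[of _ "Suc q"]) auto
    ultimately show ?thesis by (auto intro: GG_gen)
  qed
  show ?case
  proof (cases "d = 0")
    case True then show ?thesis using base Suc.prems by simp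
  next
    case False
    then have IH: "gij (rayp n p) (rayp n (p+d)) \<in> GG n \<and> gij (rayp n (p+d)) (rayp n p) \<in> GG n"
      using Suc by auto
    have b: "gij (rayp n (p+d)) (rayp n (p+d+1)) \<in> GG n \<and> gij (rayp n (p+d+1)) (rayp n (p+d)) \<in> GG n"
      using base[of "p+d"] Suc.prems by simp
    have d1: "rayp n p \<noteq> rayp n (p+d)" using inj[of p "p+d"] Suc.prems False by simp
    have d2: "rayp n (p+d) \<noteq> rayp n (p+d+1)" using inj[of "p+d" "p+d+1"] Suc.prems by simp
    have d3: "rayp n p \<noteq> rayp n (p+d+1)" using inj[of p "p+d+1"] Suc.prems by simp
    have c1: "gij (rayp n (p+d)) (rayp n (p+d+1)) \<circ> gij (rayp n p) (rayp n (p+d)) = gij (rayp n p) (rayp n (p+d+1))"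
      by (rule gij_comp[OF d1 d2 d3])
    have c2: "gij (rayp n (p+d)) (rayp n p) \<circ> gij (rayp n (p+d+1)) (rayp n (p+d)) = gij (rayp n (p+d+1)) (rayp n p)"
      by (rule gij_comp) (use d1 d2 d3 in auto)
    have "gij (rayp n p) (rayp n (p+d+1)) \<in> GG n \<and> gij (rayp n (p+d+1)) (rayp n p) \<in> GG n"
      using IH b GG_comp c1 c2 by metis
    then show ?thesis by simp
  qed
qed

lemma gij_GG:
  assumes "n \<ge> 3" "i < n" "j < n" "i \<noteq> j"
  shows "gij i j \<in> GG n"
proof -
  define pos where "pos x = (if x = 0 then n - 1 else x - 1)" for x
  have rp: "x < n \<Longrightarrow> rayp n (pos x) = x" for x
    using assms(1) unfolding pos_def
    by (cases "x = 0") (auto simp: rayp_eq)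
  have pl: "x < n \<Longrightarrow> pos x < n" for x using assms(1) by (auto simp: pos_def)
  have pne: "pos i \<noteq> pos j" using rp assms by metis
  note pl = pl[OF assms(2)] pl[OF assms(3)]
  show ?thesis
  proof (cases "pos i < pos j")
    case True
    then have "gij (rayp n (pos i)) (rayp n (pos j)) \<in> GG n \<and> gij (rayp n (pos j)) (rayp n (pos i)) \<in> GG n"
      using gij_GG_path[OF assms(1), of "pos j - pos i" "pos i"] pl by simp
    then show ?thesis by (simp only: rp[OF assms(2)] rp[OF assms(3)])
  next
    case False
    then have "pos j < pos i" using pne by auto
    then have "gij (rayp n (pos j)) (rayp n (pos i)) \<in> GG n \<and> gij (rayp n (pos i)) (rayp n (pos j)) \<in> GG n"
      using gij_GG_path[OF assms(1), of "pos i - pos j" "pos j"] pl by simp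
    then show ?thesis by (simp only: rp[OF assms(2)] rp[OF assms(3)])
  qed
qed



lemma conj_transpose:
  assumes "p \<circ> q = id" "q \<circ> p = id"
  shows "p \<circ> Transposition.transpose x y \<circ> q = Transposition.transpose (p x) (p y)"
proof
  fix z
  have pq: "p (q w) = w" for w using assms(1) by (simp add: fun_eq_iff)
  have qp: "q (p w) = w" for w using assms(2) by (simp add: fun_eq_iff)
  show "(p \<circ> Transposition.transpose x y \<circ> q) z = Transposition.transpose (p x) (p y) z"
    unfolding Transposition.transpose_def using pq qp by auto
qed

lemma third_ray:
  fixes a b :: nat
  assumes "n \<ge> 3" obtains c where "c < n" "c \<noteq> a" "c \<noteq> b"
proof -
  have "\<exists>c\<in>{0,1,2::nat}. c \<noteq> a \<and> c \<noteq> b" by auto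
  then obtain c where "c \<in> {0,1,2::nat}" "c \<noteq> a" "c \<noteq> b" by blast
  moreover have "c < n" using \<open>c \<in> {0,1,2::nat}\<close> assms by auto
  ultimately show ?thesis using that by blast
qed

lemma transp_basic:
  assumes "n \<ge> 3" "a < n" "b < n" "a \<noteq> b"
  shows "Transposition.transpose (a,1) (b,1) \<in> GG n"
proof -
  obtain c where c: "c < n" "c \<noteq> a" "c \<noteq> b" using third_ray[OF assms(1)] by blast
  have "gij c b \<circ> gij b a \<circ> gij a c \<in> GG n"
    using gij_GG[OF assms(1)] assms c by (intro GG_comp) auto
  then show ?thesis using gij_swap[of a b c] assms c by auto
qed

lemma conj_pow_GG:
  assumes "n \<ge> 3" "c < n" "i < n" "c \<noteq> i" "f \<in> GG n"
  shows "(gij c i ^^ m) \<circ> f \<circ> (gij i c ^^ m) \<in> GG n"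
  using assms by (intro GG_comp GG_pow gij_GG) auto

lemma transp_GG:
  assumes n: "n \<ge> 3" and x: "x \<in> rays n" and y: "y \<in> rays n"
  shows "Transposition.transpose x y \<in> GG n"
proof -
  obtain i k where xi: "x = (i,k)" "i < n" "1 \<le> k" using x by (auto simp: rays_def)
  obtain j l where yj: "y = (j,l)" "j < n" "1 \<le> l" using y by (auto simp: rays_def)
  have diff: "Transposition.transpose (i,k) (j,l) \<in> GG n" if ij: "i \<noteq> j" "i < n" "j < n" "1 \<le> k" "1 \<le> l" for i j k l
  proof -
    obtain c where c: "c < n" "c \<noteq> i" "c \<noteq> j" using third_ray[OF n] by blast
    let ?P = "gij c i ^^ (k-1)" and ?P' = "gij i c ^^ (k-1)"
    have t0: "Transposition.transpose (i,1) (j,1) \<in> GG n" using transp_basic n ij by auto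
    have "?P \<circ> Transposition.transpose (i,1) (j,1) \<circ> ?P' = Transposition.transpose (?P (i,1)) (?P (j,1))"
      by (rule conj_transpose) (use c gij_pow_inv in auto)
    also have "?P (i,1) = (i,k)" using gij_pow_j[of c i 1 "k-1"] c ij by simp
    also have "?P (j,1) = (j,1)" using gij_pow_other[of j c i] c ij by simp
    finally have e: "?P \<circ> Transposition.transpose (i,1) (j,1) \<circ> ?P' = Transposition.transpose (i,k) (j,1)" .
    have t1: "Transposition.transpose (i,k) (j,1) \<in> GG n"
      using conj_pow_GG[OF n c(1) ij(2) c(2) t0, of "k-1"] unfolding e .
    let ?Q = "gij c j ^^ (l-1)" and ?Q' = "gij j c ^^ (l-1)"
    have "?Q \<circ> Transposition.transpose (i,k) (j,1) \<circ> ?Q' = Transposition.transpose (?Q (i,k)) (?Q (j,1))"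
      by (rule conj_transpose) (use c gij_pow_inv in auto)
    also have "?Q (j,1) = (j,l)" using gij_pow_j[of c j 1 "l-1"] c ij by simp
    also have "?Q (i,k) = (i,k)" using gij_pow_other[of i c j] c ij by simp
    finally have e2: "?Q \<circ> Transposition.transpose (i,k) (j,1) \<circ> ?Q' = Transposition.transpose (i,k) (j,l)" .
    show ?thesis
      using conj_pow_GG[OF n c(1) ij(3) c(3) t1, of "l-1"] unfolding e2 .
  qed
  show ?thesis
  proof (cases "x = y")
    case True then show ?thesis using GG_id by simp
  next
    case False
    show ?thesis
    proof (cases "i = j")
      case False then show ?thesis using diff xi yj by simp
    next
      case True
      obtain j' where j': "j' < n" "j' \<noteq> i" using third_ray[OF n, of i i] by blast
      let ?z = "(j',1::nat)"
      have a: "Transposition.transpose x ?z \<in> GG n" using diff[of i j' k 1] xi j' by auto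
      have b: "Transposition.transpose ?z y \<in> GG n" using diff[of j' j 1 l] yj j' True
        by (simp add: transpose_commute)
      have "Transposition.transpose x ?z \<circ> Transposition.transpose ?z y \<circ> Transposition.transpose x ?z
          = Transposition.transpose x y"
        using transpose_comp_triple[of x y "(j',1)"] xi yj j' True \<open>x \<noteq> y\<close> by auto
      then show ?thesis using a b GG_comp by metis
    qed
  qed
qed

lemma perm_GG:
  assumes "n \<ge> 3" "finite A" "A \<subseteq> rays n" "p permutes A"
  shows "p \<in> GG n"
  using assms(4,2)
proof (induction rule: permutes_induct)
  case id then show ?case by (rule GG_id)
next
  case (swap a b p)
  then show ?case using transp_GG[OF assms(1)] assms(3) GG_comp by blast
qed

lemma gij_fix: "i < n \<Longrightarrow> j < n \<Longrightarrow> x \<notin> rays n \<Longrightarrow> gij i j x = x"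
  by (cases x) (auto simp: rays_def gij_simp)

lemma GG_fix:
  assumes "n \<ge> 3" "f \<in> GG n" "x \<notin> rays n"
  shows "f x = x"
proof -
  obtain ws where ws: "set ws \<subseteq> sym_gens n" "word_eval ws = f" using assms(2) by (auto simp: GG_def)
  have "word_eval ws x = x" using ws(1)
  proof (induction ws)
    case (Cons s ws)
    then obtain i where i: "1 \<le> i" "i \<le> n - 1" "s = gij i ((i+1) mod n) \<or> s = gij ((i+1) mod n) i"
      using sym_gens_iff[OF assms(1)] by auto
    have "s x = x" using i assms gij_fix[of _ n _ x] by (elim disjE) auto
    then show ?case using Cons by simp
  qed simp
  then show ?thesis using ws by simp
qed

lemma GG_bij: "n \<ge> 3 \<Longrightarrow> f \<in> GG n \<Longrightarrow> bij f"
  using GG_inv o_bij by blast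

lemma bij_fix_image: "bij f \<Longrightarrow> (\<And>x. x \<notin> A \<Longrightarrow> f x = x) \<Longrightarrow> f ` A = A"
proof -
  assume b: "bij f" and fx: "\<And>x. x \<notin> A \<Longrightarrow> f x = x"
  have "f ` (- A) = - A" using fx by force
  then have "- f ` A = - A" using bij_image_Compl_eq[OF b] by simp
  then show ?thesis by simp
qed



definition EV :: "nat \<Rightarrow> (nat \<times> nat \<Rightarrow> nat \<times> nat) \<Rightarrow> (nat \<Rightarrow> int) \<Rightarrow> nat \<Rightarrow> bool" where
  "EV n f u M = (\<forall>i<n. \<forall>k\<ge>M. 1 \<le> int k + u i \<and> f (i,k) = (i, nat (int k + u i)))"

lemma EV_mono: "EV n f u M \<Longrightarrow> M \<le> M' \<Longrightarrow> EV n f u M'"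
  unfolding EV_def by auto

lemma EV_cong: "(\<And>i. i < n \<Longrightarrow> u i = v i) \<Longrightarrow> EV n f u M = EV n f v M"
  unfolding EV_def by auto

lemma EV_cong': "EV n f u M \<Longrightarrow> (\<And>i. i < n \<Longrightarrow> u i = v i) \<Longrightarrow> EV n f v M"
  unfolding EV_def by auto

lemma EV_comp:
  assumes f: "EV n f u M1" and g: "EV n g v M2"
  shows "EV n (g \<circ> f) (\<lambda>i. u i + v i) (M1 + M2 + (\<Sum>i<n. nat \<bar>u i\<bar>))"
  unfolding EV_def
proof (intro allI impI)
  fix i k assume i: "i < n" and k: "M1 + M2 + (\<Sum>i<n. nat \<bar>u i\<bar>) \<le> k"
  have ui: "nat \<bar>u i\<bar> \<le> (\<Sum>i<n. nat \<bar>u i\<bar>)"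
    using i by (intro member_le_sum) auto
  have f1: "1 \<le> int k + u i" "f (i,k) = (i, nat (int k + u i))"
    using f i k unfolding EV_def by auto
  let ?k' = "nat (int k + u i)"
  have "int M2 \<le> int k + u i" using ui k by linarith
  then have "M2 \<le> ?k'" by linarith
  have gi: "\<forall>k\<ge>M2. 1 \<le> int k + v i \<and> g (i,k) = (i, nat (int k + v i))"
    using g i unfolding EV_def by blast
  have g1: "1 \<le> int ?k' + v i" "g (i, ?k') = (i, nat (int ?k' + v i))"
    using gi \<open>M2 \<le> ?k'\<close> by auto
  have ik: "int ?k' = int k + u i" using f1(1) by simp
  show "1 \<le> int k + (u i + v i) \<and> (g \<circ> f) (i, k) = (i, nat (int k + (u i + v i)))"
    using f1 g1 unfolding ik by (simp add: add.assoc)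
qed

lemma EV_id: "EV n id (\<lambda>i. 0) 1"
  unfolding EV_def by auto

lemma EV_pow1:
  assumes "0 < i" "i < n"
  shows "EV n (gij i 0 ^^ m) (\<lambda>j. if j = i then - int m else if j = 0 then int m else 0) (m+1)"
  unfolding EV_def
proof (intro allI impI)
  fix j k assume j: "j < n" and k: "m + 1 \<le> k"
  consider "j = i" | "j = 0" | "j \<noteq> i" "j \<noteq> 0" by blast
  then show "1 \<le> int k + (if j = i then - int m else if j = 0 then int m else 0) \<and>
        (gij i 0 ^^ m) (j, k) = (j, nat (int k + (if j = i then - int m else if j = 0 then int m else 0)))"
  proof cases
    case 1
    have "(gij i 0 ^^ m) (i, k) = (i, k - m)" using gij_pow_i[of i 0 m k] assms k by simp
    moreover have "nat (int k + - int m) = k - m" using k by simp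
    ultimately show ?thesis using 1 k assms by simp
  next
    case 2
    have "(gij i 0 ^^ m) (0, k) = (0, k + m)" using gij_pow_j[of i 0 k m] assms k by simp
    moreover have "nat (int k + int m) = k + m" by simp
    ultimately show ?thesis using 2 k assms by simp
  next
    case 3
    then show ?thesis using gij_pow_other[of j i 0 m k] k by simp
  qed
qed

lemma EV_pow2:
  assumes "0 < i" "i < n"
  shows "EV n (gij 0 i ^^ m) (\<lambda>j. if j = i then int m else if j = 0 then - int m else 0) (m+1)"
  unfolding EV_def
proof (intro allI impI)
  fix j k assume j: "j < n" and k: "m + 1 \<le> k"
  consider "j = i" | "j = 0" | "j \<noteq> i" "j \<noteq> 0" by blast
  then show "1 \<le> int k + (if j = i then int m else if j = 0 then - int m else 0) \<and>
        (gij 0 i ^^ m) (j, k) = (j, nat (int k + (if j = i then int m else if j = 0 then - int m else 0)))"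
  proof cases
    case 2
    have "(gij 0 i ^^ m) (0, k) = (0, k - m)" using gij_pow_i[of 0 i m k] assms k by simp
    moreover have "nat (int k + - int m) = k - m" using k by simp
    ultimately show ?thesis using 2 k assms by simp
  next
    case 1
    have "(gij 0 i ^^ m) (i, k) = (i, k + m)" using gij_pow_j[of 0 i k m] assms k by simp
    moreover have "nat (int k + int m) = k + m" by simp
    ultimately show ?thesis using 1 k assms by simp
  next
    case 3
    then show ?thesis using gij_pow_other[of j 0 i m k] k by simp
  qed
qed

lemma EV_single:
  assumes "0 < i" "i < n" "n \<ge> 3"
  shows "\<exists>P\<in>GG n. \<exists>M. EV n P (\<lambda>j. if j = i then w else if j = 0 then - w else 0) M"
proof (cases "w \<ge> 0")
  case True
  have "EV n (gij 0 i ^^ nat w) (\<lambda>j. if j = i then w else if j = 0 then - w else 0) (nat w + 1)"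
    by (rule EV_cong'[OF EV_pow2[OF assms(1,2), of "nat w"]]) (use True in auto)
  moreover have "gij 0 i ^^ nat w \<in> GG n" using assms by (intro GG_pow gij_GG) auto
  ultimately show ?thesis by blast
next
  case False
  have "EV n (gij i 0 ^^ nat (-w)) (\<lambda>j. if j = i then w else if j = 0 then - w else 0) (nat (-w) + 1)"
    by (rule EV_cong'[OF EV_pow1[OF assms(1,2), of "nat (-w)"]]) (use False in auto)
  moreover have "gij i 0 ^^ nat (-w) \<in> GG n" using assms by (intro GG_pow gij_GG) auto
  ultimately show ?thesis by blast
qed

lemma EV_build:
  assumes "n \<ge> 3"
  shows "j \<le> n \<Longrightarrow> \<exists>h\<in>GG n. \<exists>s M. EV n h (\<lambda>i. if 1 \<le> i \<and> i < j then w i else if i = 0 then s else 0) M"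
proof (induction j)
  case 0
  have "EV n id (\<lambda>i. if 1 \<le> i \<and> i < 0 then w i else if i = 0 then 0 else 0) 1"
    by (rule EV_cong'[OF EV_id]) auto
  then show ?case using GG_id by blast
next
  case (Suc j)
  then obtain h s M where h: "h \<in> GG n" "EV n h (\<lambda>i. if 1 \<le> i \<and> i < j then w i else if i = 0 then s else 0) M"
    by auto
  show ?case
  proof (cases "j = 0")
    case True
    have "EV n h (\<lambda>i. if 1 \<le> i \<and> i < Suc j then w i else if i = 0 then s else 0) M"
      by (rule EV_cong'[OF h(2)]) (use True in auto)
    then show ?thesis using h(1) by blast
  next
    case False
    obtain P M' where P: "P \<in> GG n" "EV n P (\<lambda>i. if i = j then w j else if i = 0 then - w j else 0) M'"
      using EV_single[of j n "w j"] False Suc.prems assms by auto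
    obtain M'' where "EV n (P \<circ> h) (\<lambda>i. (if 1 \<le> i \<and> i < j then w i else if i = 0 then s else 0) +
                (if i = j then w j else if i = 0 then - w j else 0)) M''"
      using EV_comp[OF h(2) P(2)] by blast
    then have "EV n (P \<circ> h) (\<lambda>i. if 1 \<le> i \<and> i < Suc j then w i else if i = 0 then s - w j else 0) M''"
      by (rule EV_cong') (use False in auto)
    then show ?thesis using GG_comp[OF h(1) P(1)] by blast
  qed
qed

lemma bij_from_rays: "bij_betw f R R \<Longrightarrow> (\<And>x. x \<notin> R \<Longrightarrow> f x = x) \<Longrightarrow> bij f"
proof -
  assume b: "bij_betw f R R" and fx: "\<And>x. x \<notin> R \<Longrightarrow> f x = x"
  have "inj f"
  proof (rule injI)
    fix x y assume e: "f x = f y"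
    show "x = y"
      using b fx e unfolding bij_betw_def inj_on_def by (metis imageI)
  qed
  moreover have "surj f"
  proof -
    have "f ` UNIV = f ` R \<union> f ` (- R)" by auto
    also have "f ` (- R) = - R" using fx by force
    finally show ?thesis using b unfolding bij_betw_def by auto
  qed
  ultimately show ?thesis by (simp add: bij_def)
qed



lemma zero_shift:
  assumes n1: "n \<ge> 1" and b: "bij \<rho>" and fx: "\<And>x. x \<notin> rays n \<Longrightarrow> \<rho> x = x"
    and ev: "EV n \<rho> (\<lambda>i. if i = 0 then s else 0) M" and M1: "M \<ge> 1"
  shows "s = 0"
proof (rule ccontr)
  assume s0: "s \<noteq> 0"
  define A where "A = {(i,k). i < n \<and> 1 \<le> k \<and> k < M}"
  have finA: "finite A" by (rule finite_subset[of _ "{..<n} \<times> {..<M}"]) (auto simp: A_def)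
  have Ar: "A \<subseteq> rays n" by (auto simp: A_def rays_def)
  have inj: "inj \<rho>" using b by (simp add: bij_def)
  have rr: "\<rho> ` rays n = rays n" using bij_fix_image[OF b] fx by blast
  have ev0: "1 \<le> int k + s \<and> \<rho> (0,k) = (0, nat (int k + s))" if "k \<ge> M" for k
    using ev[unfolded EV_def, rule_format, of 0 k] that n1 by simp
  have evi: "\<rho> (i,k) = (i,k)" if "k \<ge> M" "i < n" "i \<noteq> 0" for i k
    using ev[unfolded EV_def, rule_format, of i k] that by simp
  show False
  proof (cases "s > 0")
    case True
    define z where "z = (0::nat, M)"
    have zA: "z \<notin> A" by (auto simp: A_def z_def)
    have sub: "insert z A \<subseteq> \<rho> ` A"
    proof
      fix y assume y: "y \<in> insert z A"
      then have "y \<in> rays n" using Ar n1 M1 by (auto simp: z_def rays_def)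
      then obtain x where x: "x \<in> rays n" "\<rho> x = y" using rr by (metis imageE)
      obtain i k where ik: "x = (i,k)" "i < n" "1 \<le> k" using x(1) by (auto simp: rays_def)
      have "x \<in> A"
      proof (rule ccontr)
        assume "x \<notin> A"
        then have kM: "k \<ge> M" using ik by (auto simp: A_def)
        show False
        proof (cases "i = 0")
          case True
          then have "y = (0, nat (int k + s))" using ev0[OF kM] x ik by simp
          moreover have "nat (int k + s) > M" using kM \<open>s > 0\<close> by linarith
          ultimately show False using y by (auto simp: z_def A_def)
        next
          case False
          then have "y = (i,k)" using evi[OF kM ik(2)] x ik by simp
          then show False using y kM False by (auto simp: z_def A_def)
        qed
      qed
      then show "y \<in> \<rho> ` A" using x by blast
    qed
    have "card (insert z A) \<le> card (\<rho> ` A)" by (rule card_mono[OF finite_imageI[OF finA] sub])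
    also have "\<dots> \<le> card A" by (rule card_image_le[OF finA])
    finally show False using zA finA by simp
  next
    case False
    then have sneg: "s < 0" using s0 by simp
    have Ms: "1 \<le> int M + s" using ev0[of M] by simp
    define z where "z = (0::nat, nat (int M + s))"
    have zA: "z \<in> A" using Ms sneg n1 by (auto simp: A_def z_def)
    have zimg: "\<rho> (0, M) = z" using ev0[of M] by (simp add: z_def)
    have sub: "\<rho> ` A \<subseteq> A - {z}"
    proof
      fix y assume "y \<in> \<rho> ` A"
      then obtain x where x: "x \<in> A" "\<rho> x = y" by blast
      have "y \<in> rays n" using x Ar rr by blast
      then obtain i k' where ik: "y = (i,k')" "i < n" "1 \<le> k'" by (auto simp: rays_def)
      have "k' < M"
      proof (rule ccontr)
        assume "\<not> k' < M"
        then have kM: "k' \<ge> M" by simp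
        show False
        proof (cases "i = 0")
          case True
          define x' where "x' = (0::nat, nat (int k' - s))"
          have "nat (int k' - s) \<ge> M" using kM sneg by linarith
          then have "\<rho> x' = (0, nat (int (nat (int k' - s)) + s))" using ev0 by (simp add: x'_def)
          also have "\<dots> = y" using ik True sneg by simp
          finally have "x = x'" using x(2) inj by (metis injD)
          then show False using x(1) \<open>nat (int k' - s) \<ge> M\<close> by (simp add: A_def x'_def)
        next
          case False
          then have "\<rho> (i,k') = y" using evi[OF kM ik(2)] ik by simp
          then have "x = (i,k')" using x(2) inj by (metis injD)
          then show False using x(1) kM by (simp add: A_def)
        qed
      qed
      then have "y \<in> A" using ik by (simp add: A_def)
      moreover have "y \<noteq> z"
      proof
        assume "y = z"
        then have "x = (0,M)" using x(2) zimg inj by (metis injD)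
        then show False using x(1) by (simp add: A_def)
      qed
      ultimately show "y \<in> A - {z}" by simp
    qed
    have "card A = card (\<rho> ` A)" using card_image[of \<rho> A] inj by (simp add: inj_on_subset)
    also have "\<dots> \<le> card (A - {z})" by (rule card_mono) (use finA sub in auto)
    also have "\<dots> < card A"
    proof -
      have "card (A - {z}) = card A - 1" using zA finA by simp
      moreover have "card A > 0" using zA finA card_gt_0_iff by blast
      ultimately show ?thesis by simp
    qed
    finally show False by simp
  qed
qed

lemma houghton_GG:
  assumes n: "n \<ge> 3" and \<sigma>: "\<sigma> \<in> houghton n"
  shows "\<sigma> \<in> GG n"
proof -
  from \<sigma> have bs: "bij_betw \<sigma> (rays n) (rays n)" and fs: "\<And>x. x \<notin> rays n \<Longrightarrow> \<sigma> x = x"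
    by (auto simp: houghton_def)
  from \<sigma> obtain N and t :: "nat \<Rightarrow> int" where
    Nt: "\<forall>i<n. \<forall>k. N \<le> k \<and> 1 \<le> k \<longrightarrow> 1 \<le> int k + t i \<and> \<sigma> (i, k) = (i, nat (int k + t i))"
    by (auto simp: houghton_def)
  have evs: "EV n \<sigma> t (N+1)" unfolding EV_def using Nt by auto
  obtain h s M where h: "h \<in> GG n" "EV n h (\<lambda>i. if 1 \<le> i \<and> i < n then - t i else if i = 0 then s else 0) M"
    using EV_build[OF n, of n "\<lambda>i. - t i"] by auto
  define \<rho> where "\<rho> = h \<circ> \<sigma>"
  obtain M' where "EV n \<rho> (\<lambda>i. t i + (if 1 \<le> i \<and> i < n then - t i else if i = 0 then s else 0)) M'"
    using EV_comp[OF evs h(2)] unfolding \<rho>_def by blast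
  then have "EV n \<rho> (\<lambda>i. if i = 0 then t 0 + s else 0) M'"
    by (rule EV_cong') auto
  then have evr: "EV n \<rho> (\<lambda>i. if i = 0 then t 0 + s else 0) (max M' 1)"
    by (rule EV_mono) simp
  have bsig: "bij \<sigma>" using bij_from_rays[OF bs] fs by blast
  have br: "bij \<rho>" unfolding \<rho>_def using bsig GG_bij[OF n h(1)] by (simp add: bij_comp)
  have fr: "\<rho> x = x" if "x \<notin> rays n" for x
    using that fs GG_fix[OF n h(1)] by (simp add: \<rho>_def)
  have ts: "t 0 + s = 0" using zero_shift[OF _ br fr evr] n by simp
  define M'' where "M'' = max M' 1"
  define A where "A = {(i,k). i < n \<and> 1 \<le> k \<and> k < M''}"
  have finA: "finite A" by (rule finite_subset[of _ "{..<n} \<times> {..<M''}"]) (auto simp: A_def)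
  have Ar: "A \<subseteq> rays n" by (auto simp: A_def rays_def)
  have fixA: "\<rho> x = x" if "x \<notin> A" for x
  proof (cases "x \<in> rays n")
    case True
    then obtain i k where ik: "x = (i,k)" "i < n" "1 \<le> k" by (auto simp: rays_def)
    then have "k \<ge> M''" using that by (auto simp: A_def)
    then show ?thesis using evr ik ts unfolding EV_def M''_def by auto
  next
    case False then show ?thesis using fr by simp
  qed
  have "\<rho> ` A = A" using bij_fix_image[OF br] fixA by blast
  moreover have "inj_on \<rho> A" by (rule inj_on_subset[OF bij_is_inj[OF br]]) simp
  ultimately have "bij_betw \<rho> A A" by (simp add: bij_betw_def)
  then have "\<rho> permutes A" using fixA by (rule bij_imp_permutes)
  then have rG: "\<rho> \<in> GG n" using perm_GG[OF n finA Ar] by blast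
  obtain h' where h': "h' \<in> GG n" "h' \<circ> h = id" using GG_inv[OF n h(1)] by blast
  have "h' \<circ> \<rho> = \<sigma>" unfolding \<rho>_def using h'(2) by (simp add: o_assoc)
  then show ?thesis using GG_comp[OF rG h'(1)] by simp
qed



fun red :: "('a \<Rightarrow> 'a) list \<Rightarrow> bool" where
  "red (a # b # xs) = (b \<circ> a \<noteq> id \<and> red (b # xs))"
| "red _ = True"

lemma not_red_split: "\<not> red ws \<Longrightarrow> \<exists>xs a b ys. ws = xs @ a # b # ys \<and> b \<circ> a = id"
proof (induction ws rule: red.induct)
  case (1 a b xs)
  show ?case
  proof (cases "b \<circ> a = id")
    case True then show ?thesis by (intro exI[of _ "[]"] exI[of _ a] exI[of _ b] exI[of _ xs]) simp
  next
    case False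
    then have "\<not> red (b # xs)" using 1(2) by simp
    then obtain xs' a' b' ys where "b # xs = xs' @ a' # b' # ys" "b' \<circ> a' = id" using 1(1) False by blast
    then show ?thesis by (intro exI[of _ "a # xs'"] exI[of _ a'] exI[of _ b'] exI[of _ ys]) simp
  qed
qed auto

lemma min_word_red:
  assumes n: "n \<ge> 3" and \<sigma>: "\<sigma> \<in> GG n"
  shows "\<exists>ws. length ws = word_length n \<sigma> \<and> set ws \<subseteq> sym_gens n \<and> word_eval ws = \<sigma> \<and> red ws"
proof -
  let ?P = "\<lambda>m. \<exists>ws. length ws = m \<and> set ws \<subseteq> sym_gens n \<and> word_eval ws = \<sigma>"
  have ex: "\<exists>m. ?P m" using \<sigma> unfolding GG_def by blast
  have PL: "?P (word_length n \<sigma>)" unfolding word_length_def by (rule LeastI_ex[OF ex])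
  then obtain ws where ws: "length ws = word_length n \<sigma>" "set ws \<subseteq> sym_gens n" "word_eval ws = \<sigma>" by blast
  have "red ws"
  proof (rule ccontr)
    assume "\<not> red ws"
    then obtain xs a b ys where sp: "ws = xs @ a # b # ys" "b \<circ> a = id" using not_red_split by blast
    have "word_eval ws = word_eval ys \<circ> (b \<circ> a) \<circ> word_eval xs" using sp(1) by (simp add: o_assoc)
    then have "word_eval (xs @ ys) = \<sigma>" using sp(2) ws(3) by simp
    moreover have "set (xs @ ys) \<subseteq> sym_gens n" using ws(2) sp(1) by auto
    ultimately have "?P (length (xs @ ys))" by blast
    then have "word_length n \<sigma> \<le> length (xs @ ys)" unfolding word_length_def by (rule Least_le)
    then show False using ws(1) sp(1) by simp
  qed
  then show ?thesis using ws by blast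
qed

definition WW :: "nat \<Rightarrow> nat \<Rightarrow> (nat \<times> nat \<Rightarrow> nat \<times> nat) list set" where
  "WW n L = {ws. length ws = L \<and> set ws \<subseteq> sym_gens n \<and> red ws}"

lemma finite_sym_gens: "finite (sym_gens n)"
  unfolding sym_gens_def gens_def by (simp add: setcompr_eq_image)

lemma card_sym_gens: "card (sym_gens n) \<le> 2 * n - 2"
proof -
  have g: "gens n = (\<lambda>i. gij i ((i + 1) mod n)) ` {1..n-1}" unfolding gens_def by auto
  have "card (gens n) \<le> card {1..n-1}" unfolding g by (rule card_image_le) simp
  then have "card (gens n) \<le> n - 1" by simp
  moreover have "card (inv ` gens n) \<le> card (gens n)" by (rule card_image_le) (simp add: g)
  moreover have "card (sym_gens n) \<le> card (gens n) + card (inv ` gens n)" unfolding sym_gens_def by (rule card_Un_le)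
  ultimately show ?thesis by linarith
qed

lemma finite_WW: "finite (WW n L)"
  by (rule finite_subset[OF _ finite_lists_length_eq[OF finite_sym_gens, of n L]]) (auto simp: WW_def)

lemma card_WW_step:
  assumes n: "n \<ge> 3"
  shows "card (WW n (Suc (Suc L))) \<le> (card (sym_gens n) - 1) * card (WW n (Suc L))"
proof -
  let ?S = "sym_gens n"
  let ?B = "\<lambda>ws. {s \<in> ?S. hd ws \<circ> s \<noteq> id}"
  have sub: "WW n (Suc (Suc L)) \<subseteq> (\<lambda>(ws,s). s # ws) ` (SIGMA ws:WW n (Suc L). ?B ws)"
  proof
    fix ws assume "ws \<in> WW n (Suc (Suc L))"
    then obtain s b xs where ws: "ws = s # b # xs" "length xs = L" "set ws \<subseteq> ?S" "red ws"
      unfolding WW_def by (auto simp: length_Suc_conv)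
    then have "b # xs \<in> WW n (Suc L)" "s \<in> ?B (b # xs)" unfolding WW_def by auto
    then show "ws \<in> (\<lambda>(ws,s). s # ws) ` (SIGMA ws:WW n (Suc L). ?B ws)" using ws(1) by force
  qed
  have Bc: "card (?B ws) \<le> card ?S - 1" if "ws \<in> WW n (Suc L)" for ws
  proof -
    have "hd ws \<in> ?S" using that unfolding WW_def by (cases ws) auto
    then obtain s0 where s0: "s0 \<in> ?S" "hd ws \<circ> s0 = id" using sym_gens_inverse[OF n] by blast
    have "?B ws \<subseteq> ?S - {s0}" using s0 by auto
    then have "card (?B ws) \<le> card (?S - {s0})" by (intro card_mono) (auto simp: finite_sym_gens)
    also have "\<dots> = card ?S - 1" using s0(1) finite_sym_gens by simp
    finally show ?thesis .
  qed
  have "card (WW n (Suc (Suc L))) \<le> card ((\<lambda>(ws,s). s # ws) ` (SIGMA ws:WW n (Suc L). ?B ws))"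
    by (rule card_mono[OF _ sub]) (simp add: finite_WW finite_sym_gens)
  also have "\<dots> \<le> card (SIGMA ws:WW n (Suc L). ?B ws)" by (rule card_image_le) (simp add: finite_WW finite_sym_gens)
  also have "\<dots> = (\<Sum>ws\<in>WW n (Suc L). card (?B ws))" by (rule card_SigmaI) (simp_all add: finite_WW finite_sym_gens)
  also have "\<dots> \<le> (\<Sum>ws\<in>WW n (Suc L). card ?S - 1)" by (rule sum_mono) (rule Bc)
  also have "\<dots> = (card ?S - 1) * card (WW n (Suc L))" by simp
  finally show ?thesis .
qed

lemma card_WW1: "card (WW n (Suc L)) \<le> (2 * n - 2) * (2 * n - 3) ^ L" if n: "n \<ge> 3"
proof (induction L)
  case 0
  have "WW n (Suc 0) \<subseteq> (\<lambda>s. [s]) ` sym_gens n" unfolding WW_def by (auto simp: length_Suc_conv)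
  then have "card (WW n (Suc 0)) \<le> card ((\<lambda>s. [s]) ` sym_gens n)"
    by (rule card_mono[rotated]) (simp add: finite_sym_gens)
  also have "\<dots> \<le> card (sym_gens n)" by (rule card_image_le[OF finite_sym_gens])
  finally have "card (WW n (Suc 0)) \<le> card (sym_gens n)" .
  then show ?case using card_sym_gens[of n] by simp
next
  case (Suc L)
  have "card (WW n (Suc (Suc L))) \<le> (card (sym_gens n) - 1) * card (WW n (Suc L))" by (rule card_WW_step[OF n])
  also have "\<dots> \<le> (2 * n - 3) * ((2 * n - 2) * (2 * n - 3) ^ L)"
    using card_sym_gens[of n] Suc by (intro mult_mono) auto
  also have "\<dots> = (2 * n - 2) * (2 * n - 3) ^ Suc L" by (metis mult.assoc mult.commute power_Suc)
  finally show ?case .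
qed

lemma card_WW: "card (WW n L) \<le> 2 * (2 * n - 3) ^ L" if n: "n \<ge> 3"
proof (cases L)
  case 0
  have "WW n 0 = {[]}" unfolding WW_def by auto
  then show ?thesis using 0 by simp
next
  case (Suc L')
  have "card (WW n L) \<le> (2 * n - 2) * (2 * n - 3) ^ L'" using card_WW1[OF n] Suc by simp
  also have "\<dots> \<le> (2 * (2 * n - 3)) * (2 * n - 3) ^ L'" using n by (intro mult_right_mono) auto
  also have "\<dots> = 2 * (2 * n - 3) ^ Suc L'" by (metis mult.assoc mult.commute power_Suc)
  finally show ?thesis using Suc by simp
qed

lemma geom_bound: "(b::nat) \<ge> 3 \<Longrightarrow> (\<Sum>L\<le>R. 2 * b ^ L) + 1 \<le> b ^ Suc R"
proof (induction R)
  case 0 then show ?case by simp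
next
  case (Suc R)
  have "(\<Sum>L\<le>Suc R. 2 * b ^ L) + 1 = ((\<Sum>L\<le>R. 2 * b ^ L) + 1) + 2 * b ^ Suc R" by simp
  also have "\<dots> \<le> b ^ Suc R + 2 * b ^ Suc R" using Suc by simp
  also have "\<dots> = 3 * b ^ Suc R" by simp
  also have "\<dots> \<le> b * b ^ Suc R" using Suc.prems by (intro mult_right_mono) auto
  finally show ?case by simp
qed

lemma card_Dset:
  assumes n: "n \<ge> 3" and k: "k \<ge> 1"
  shows "card (Dset n k) \<le> (2 * n - 3) ^ Suc (nat \<lfloor>real k * log (real (2 * n - 2)) (real k)\<rfloor>)"
proof -
  define R where "R = nat \<lfloor>real k * log (real (2 * n - 2)) (real k)\<rfloor>"
  have sub: "Dset n k \<subseteq> word_eval ` (\<Union>L\<in>{..R}. WW n L)"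
  proof
    fix \<sigma> assume \<sigma>: "\<sigma> \<in> Dset n k"
    then have "\<sigma> \<in> GG n" using houghton_GG[OF n] by (auto simp: Dset_def Cset_def)
    then obtain ws where ws: "length ws = word_length n \<sigma>" "set ws \<subseteq> sym_gens n" "word_eval ws = \<sigma>" "red ws"
      using min_word_red[OF n] by blast
    have "real (word_length n \<sigma>) \<le> real k * log (real (2 * n - 2)) (real k)"
      using \<sigma> by (simp add: Dset_def)
    then have "int (word_length n \<sigma>) \<le> \<lfloor>real k * log (real (2 * n - 2)) (real k)\<rfloor>"
      by (simp add: le_floor_iff)
    then have "word_length n \<sigma> \<le> R" unfolding R_def by linarith
    then have "ws \<in> (\<Union>L\<in>{..R}. WW n L)" using ws unfolding WW_def by auto
    then show "\<sigma> \<in> word_eval ` (\<Union>L\<in>{..R}. WW n L)" using ws(3) by blast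
  qed
  have fin: "finite (\<Union>L\<in>{..R}. WW n L)" by (simp add: finite_WW)
  have "card (Dset n k) \<le> card (word_eval ` (\<Union>L\<in>{..R}. WW n L))"
    by (rule card_mono[OF finite_imageI[OF fin] sub])
  also have "\<dots> \<le> card (\<Union>L\<in>{..R}. WW n L)" by (rule card_image_le[OF fin])
  also have "\<dots> \<le> (\<Sum>L\<le>R. card (WW n L))" by (rule card_UN_le) simp
  also have "\<dots> \<le> (\<Sum>L\<le>R. 2 * (2 * n - 3) ^ L)" by (rule sum_mono) (rule card_WW[OF n])
  also have "\<dots> \<le> (2 * n - 3) ^ Suc R"
  proof -
    have "3 \<le> 2 * n - 3" using n by simp
    from geom_bound[OF this, of R] show ?thesis by linarith
  qed
  finally show ?thesis unfolding R_def .
qed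



lemma transl_fin:
  assumes fx: "\<And>i k. k > K \<Longrightarrow> p (i,k) = (i,k)"
  shows "transl p i = 0"
  unfolding transl_def
proof (rule the_equality)
  show "\<exists>N. \<forall>k. N \<le> k \<and> 1 \<le> k \<longrightarrow> 1 \<le> int k + 0 \<and> p (i, k) = (i, nat (int k + 0))"
    using fx by (intro exI[of _ "Suc K"]) auto
next
  fix t assume "\<exists>N. \<forall>k. N \<le> k \<and> 1 \<le> k \<longrightarrow> 1 \<le> int k + t \<and> p (i, k) = (i, nat (int k + t))"
  then obtain N where N: "\<forall>k. N \<le> k \<and> 1 \<le> k \<longrightarrow> 1 \<le> int k + t \<and> p (i, k) = (i, nat (int k + t))" by blast
  define k where "k = N + K + 1"
  have "N \<le> k \<and> 1 \<le> k" by (simp add: k_def)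
  then have "1 \<le> int k + t \<and> p (i, k) = (i, nat (int k + t))" using N by blast
  moreover have "p (i,k) = (i,k)" using fx by (simp add: k_def)
  ultimately show "t = 0" by auto
qed

lemma complexity_fin:
  assumes n: "n \<ge> 1" and k: "k \<ge> 1"
    and p: "p permutes ((\<lambda>j. (0::nat, j)) ` {1..k})" and pk: "p (0,k) \<noteq> (0,k)"
  shows "p \<in> Cset n k"
proof -
  let ?S = "(\<lambda>j. (0::nat, j)) ` {1..k}"
  have Sr: "?S \<subseteq> rays n" using n by (auto simp: rays_def)
  have fixp: "x \<notin> ?S \<Longrightarrow> p x = x" for x using p by (simp add: permutes_not_in)
  have fixk: "p (i,j) = (i,j)" if "j > k" for i j by (rule fixp) (use that in auto)
  have pr: "p permutes rays n" using permutes_subset[OF p Sr] .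
  have hough: "p \<in> houghton n"
    unfolding houghton_def
  proof (intro CollectI conjI allI impI)
    show "bij_betw p (rays n) (rays n)" using permutes_imp_bij[OF pr] .
    show "p x = x" if "x \<notin> rays n" for x using permutes_not_in[OF pr that] .
    show "\<exists>N t. \<forall>i<n. \<forall>ka. N \<le> ka \<and> 1 \<le> ka \<longrightarrow> 1 \<le> int ka + t i \<and> p (i, ka) = (i, nat (int ka + t i))"
      using fixk by (intro exI[of _ "Suc k"] exI[of _ "\<lambda>i. 0"]) auto
  qed
  have tr: "transl p i = 0" for i using transl_fin[of k p] fixk by blast
  have def_iff: "defect p i j \<longleftrightarrow> p (i,j) \<noteq> (i,j)" if "j \<ge> 1" for i j
    using that by (simp add: defect_def tr)
  have pc0: "pcomp p 0 = k"
  proof -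
    have ex: "\<exists>j\<ge>1. defect p 0 j" using def_iff[of k 0] k pk by auto
    have D: "{j. 1 \<le> j \<and> defect p 0 j} \<subseteq> {1..k}"
      using def_iff fixk by (auto simp: not_less[symmetric])
    have "Max {j. 1 \<le> j \<and> defect p 0 j} = k"
    proof (rule Max_eqI)
      show "finite {j. 1 \<le> j \<and> defect p 0 j}" using D finite_subset by blast
      show "k \<in> {j. 1 \<le> j \<and> defect p 0 j}" using def_iff[of k 0] k pk by auto
      show "y \<le> k" if "y \<in> {j. 1 \<le> j \<and> defect p 0 j}" for y using D that by auto
    qed
    then show ?thesis using ex by (simp add: pcomp_def)
  qed
  have pci: "pcomp p i = 0" if "i \<noteq> 0" for i
  proof -
    have "\<not> defect p i j" if "j \<ge> 1" for j
    proof -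
      have "p (i,j) = (i,j)" by (rule fixp) (use \<open>i \<noteq> 0\<close> in auto)
      then show ?thesis using def_iff[OF that] by simp
    qed
    then show ?thesis by (auto simp: pcomp_def)
  qed
  have "complexity n p = (\<Sum>i<n. if i = 0 then k else 0)"
    unfolding complexity_def by (rule sum.cong) (auto simp: pc0 pci)
  also have "\<dots> = k" using n by (simp add: sum.delta)
  finally show ?thesis using hough by (simp add: Cset_def)
qed

lemma card_Cset_lower:
  assumes n: "n \<ge> 1" and k: "k \<ge> 2" and fin: "finite (Cset n k)"
  shows "fact (k - 1) \<le> card (Cset n k)"
proof -
  let ?S = "(\<lambda>j. (0::nat, j)) ` {1..k}"
  let ?S' = "(\<lambda>j. (0::nat, j)) ` {1..k-1}"
  let ?P = "{q. q permutes ?S'}"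
  let ?\<tau> = "Transposition.transpose (0::nat, k - 1) (0, k)"
  have inj0: "inj (\<lambda>j. (0::nat, j))" by (auto simp: inj_def)
  have "card ?S' = card {1..k-1}" by (rule card_image) (simp add: inj_on_def)
  then have cS': "card ?S' = k - 1" by simp
  have cP: "card ?P = fact (k - 1)" by (rule card_permutations[OF cS']) simp
  have injm: "inj_on (\<lambda>q. q \<circ> ?\<tau>) ?P"
  proof (rule inj_onI)
    fix q1 q2 assume "q1 \<circ> ?\<tau> = q2 \<circ> ?\<tau>"
    then have "q1 \<circ> ?\<tau> \<circ> ?\<tau> = q2 \<circ> ?\<tau> \<circ> ?\<tau>" by simp
    then show "q1 = q2" by (simp add: o_assoc[symmetric])
  qed
  have sub: "(\<lambda>q. q \<circ> ?\<tau>) ` ?P \<subseteq> Cset n k"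
  proof
    fix p assume "p \<in> (\<lambda>q. q \<circ> ?\<tau>) ` ?P"
    then obtain q where q: "q permutes ?S'" and pq: "p = q \<circ> ?\<tau>" by blast
    have SS: "?S' \<subseteq> ?S" by auto
    have qS: "q permutes ?S" using permutes_subset[OF q SS] .
    have tS: "?\<tau> permutes ?S" using k by (intro permutes_swap_id) auto
    have pS: "p permutes ?S" unfolding pq by (rule permutes_compose[OF tS qS])
    have "(0, k - 1) \<in> ?S'" using k by auto
    then have "q (0, k-1) \<in> ?S'" using permutes_in_image[OF q] by blast
    then have "p (0,k) \<noteq> (0,k)" unfolding pq by auto
    then show "p \<in> Cset n k" using complexity_fin[OF n _ pS] k by simp
  qed
  have "card ((\<lambda>q. q \<circ> ?\<tau>) ` ?P) = fact (k - 1)" using card_image[OF injm] cP by simp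
  moreover have "card ((\<lambda>q. q \<circ> ?\<tau>) ` ?P) \<le> card (Cset n k)" by (rule card_mono[OF fin sub])
  ultimately show ?thesis by simp
qed



lemma pow_le_exp_fact: "real k ^ k \<le> exp (real k) * fact k"
proof (induction k)
  case 0 then show ?case by simp
next
  case (Suc k)
  have key: "(real k + 1) ^ k \<le> exp 1 * real k ^ k"
  proof (cases "k = 0")
    case True then show ?thesis by simp
  next
    case False
    then have kp: "real k > 0" by simp
    have "real k + 1 = real k * (1 + 1 / real k)" using kp by (simp add: field_simps)
    also have "\<dots> \<le> real k * exp (1 / real k)"
      using kp exp_ge_add_one_self[of "1 / real k"] by (intro mult_left_mono) auto
    finally have "(real k + 1) ^ k \<le> (real k * exp (1 / real k)) ^ k"
      by (intro power_mono) auto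
    also have "\<dots> = real k ^ k * exp (1 / real k) ^ k" by (simp add: power_mult_distrib)
    also have "exp (1 / real k) ^ k = exp (real k * (1 / real k))" by (rule exp_of_nat_mult[symmetric])
    also have "\<dots> = exp 1" using kp by simp
    finally show ?thesis by (simp add: mult.commute)
  qed
  have "real (Suc k) ^ Suc k = (real k + 1) * (real k + 1) ^ k" by (simp add: add.commute)
  also have "\<dots> \<le> (real k + 1) * (exp 1 * real k ^ k)" using key by (intro mult_left_mono) auto
  also have "\<dots> \<le> (real k + 1) * (exp 1 * (exp (real k) * fact k))"
    using Suc by (intro mult_left_mono) auto
  also have "\<dots> = exp (real (Suc k)) * fact (Suc k)"
    by (simp add: exp_add[symmetric] algebra_simps)
  finally show ?case .
qed

lemma g_bound:
  fixes n k :: nat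
  assumes n: "n \<ge> 3" and k: "k \<ge> 2"
  defines "b \<equiv> real (2 * n - 3)" and "B \<equiv> real (2 * n - 2)"
  defines "\<alpha> \<equiv> ln b / ln B"
  shows "real ((2 * n - 3) ^ Suc (nat \<lfloor>real k * log (real (2 * n - 2)) (real k)\<rfloor>)) / fact (k - 1)
     \<le> b * exp (ln (real k) + real k - (1 - \<alpha>) * (real k * ln (real k)))"
proof -
  define R where "R = nat \<lfloor>real k * log B (real k)\<rfloor>"
  have b3: "b \<ge> 3" using n unfolding b_def by simp
  have B4: "B \<ge> 4" using n unfolding B_def by simp
  have kp: "real k > 0" using k by simp
  have lk: "ln (real k) \<ge> 0" using k by simp
  have lB: "ln B > 0" using B4 by simp
  have x0: "real k * log B (real k) \<ge> 0" using k B4 by simp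
  have RR: "real R \<le> real k * log B (real k)" unfolding R_def using x0 by linarith
  have "b ^ R = b powr real R" using b3 by (simp add: powr_realpow)
  also have "\<dots> \<le> b powr (real k * log B (real k))" using RR b3 by (intro powr_mono) auto
  also have "\<dots> = exp (\<alpha> * (real k * ln (real k)))"
    using b3 by (simp add: powr_def log_def \<alpha>_def)
  finally have bR: "b ^ Suc R \<le> b * exp (\<alpha> * (real k * ln (real k)))" using b3 by simp
  have fk: "fact k = real k * fact (k - 1)" using k by (simp add: fact_reduce)
  have "real k ^ k = real k powr real k" using kp by (simp add: powr_realpow)
  also have "\<dots> = exp (real k * ln (real k))" using kp by (simp add: powr_def)
  finally have kk: "real k ^ k = exp (real k * ln (real k))" .
  have "exp (real k * ln (real k)) \<le> exp (real k) * (real k * fact (k - 1))"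
    using pow_le_exp_fact[of k] unfolding kk fk .
  also have "\<dots> = exp (real k + ln (real k)) * fact (k - 1)"
    using kp by (simp add: exp_add)
  finally have "exp (real k * ln (real k)) / exp (real k + ln (real k)) \<le> fact (k - 1)"
    by (simp add: divide_le_eq mult.commute)
  then have ff: "exp (real k * ln (real k) - (real k + ln (real k))) \<le> fact (k - 1)"
    by (simp add: exp_diff)
  have "real ((2 * n - 3) ^ Suc R) / fact (k - 1) = b ^ Suc R / fact (k - 1)" unfolding b_def by simp
  also have "\<dots> \<le> b * exp (\<alpha> * (real k * ln (real k))) / exp (real k * ln (real k) - (real k + ln (real k)))"
    using bR ff b3 by (intro frac_le) auto
  also have "\<dots> = b * exp (\<alpha> * (real k * ln (real k)) - (real k * ln (real k) - (real k + ln (real k))))"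
    by (simp add: exp_diff)
  also have "\<alpha> * (real k * ln (real k)) - (real k * ln (real k) - (real k + ln (real k)))
      = ln (real k) + real k - (1 - \<alpha>) * (real k * ln (real k))" by (simp add: algebra_simps)
  finally show ?thesis unfolding R_def B_def .
qed

lemma ratio_bound:
  fixes n k :: nat
  assumes n: "n \<ge> 3" and k: "k \<ge> 2"
  shows "0 \<le> real (card (Dset n k)) / real (card (Cset n k)) \<and>
    real (card (Dset n k)) / real (card (Cset n k)) \<le>
    real (2 * n - 3) * exp (ln (real k) + real k - (1 - ln (real (2 * n - 3)) / ln (real (2 * n - 2))) * (real k * ln (real k)))"
proof -
  let ?R = "nat \<lfloor>real k * log (real (2 * n - 2)) (real k)\<rfloor>"
  let ?rhs = "real (2 * n - 3) * exp (ln (real k) + real k - (1 - ln (real (2 * n - 3)) / ln (real (2 * n - 2))) * (real k * ln (real k)))"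
  have rpos: "0 \<le> ?rhs" by simp
  show ?thesis
  proof (cases "finite (Cset n k)")
    case False
    then show ?thesis using rpos by simp
  next
    case True
    have C: "fact (k - 1) \<le> card (Cset n k)" using card_Cset_lower[OF _ k True] n by simp
    then have Cr: "(fact (k - 1) :: real) \<le> real (card (Cset n k))"
      by (metis of_nat_fact of_nat_le_iff)
    have fp: "(0::real) < fact (k - 1)" by simp
    have D: "real (card (Dset n k)) \<le> real ((2 * n - 3) ^ Suc ?R)"
    proof -
      have "card (Dset n k) \<le> (2 * n - 3) ^ Suc ?R" using card_Dset[OF n, of k] k by simp
      then show ?thesis by (simp only: of_nat_le_iff)
    qed
    have "real (card (Dset n k)) / real (card (Cset n k)) \<le> real (card (Dset n k)) / fact (k - 1)"
    proof (rule divide_left_mono)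
      show "fact (k - 1) \<le> real (card (Cset n k))" by (rule Cr)
      show "0 \<le> real (card (Dset n k))" by simp
      have "0 < real (card (Cset n k))" using Cr fp by linarith
      then show "0 < real (card (Cset n k)) * fact (k - 1)" using fp by (intro mult_pos_pos)
    qed
    also have "\<dots> \<le> real ((2 * n - 3) ^ Suc ?R) / fact (k - 1)"
      using D fp by (intro divide_right_mono) auto
    also have "\<dots> \<le> ?rhs" using g_bound[OF n k] by simp
    finally show ?thesis by simp
  qed
qed

theorem mainTheorem6:
  fixes n :: nat
  assumes "n \<ge> 3"
  shows "(\<lambda>k. real (card (Dset n k)) / real (card (Cset n k))) \<longlonglongrightarrow> 0"
proof -
  have n: "n \<ge> 3" using assms .
  define b where "b = real (2 * n - 3)"
  define B where "B = real (2 * n - 2)"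
  define c where "c = 1 - ln b / ln B"
  have b3: "b \<ge> 3" using n unfolding b_def by simp
  have lB: "ln B > 0" using n unfolding B_def by simp
  have "ln b < ln B" using n b3 unfolding b_def B_def by simp
  then have cp: "c > 0" unfolding c_def using lB by (simp add: divide_less_eq)
  define K where "K = nat \<lceil>exp (3 / c)\<rceil> + 2"
  have ev: "eventually (\<lambda>k. real (card (Dset n k)) / real (card (Cset n k)) \<le> b / real k) sequentially"
    unfolding eventually_sequentially
  proof (intro exI[of _ K] allI impI)
    fix k assume kK: "K \<le> k"
    then have k: "k \<ge> 2" unfolding K_def by simp
    have kp: "real k > 0" using k by simp
    have "exp (3 / c) \<le> real k" using kK unfolding K_def by linarith
    then have "3 / c \<le> ln (real k)" using kp by (metis exp_gt_zero ln_exp ln_le_cancel_iff)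
    then have c3: "3 \<le> c * ln (real k)" using cp by (simp add: divide_le_eq mult.commute)
    have lk: "ln (real k) \<le> real k - 1" using kp by (rule ln_le_minus_one)
    have "c * (real k * ln (real k)) \<ge> 3 * real k"
      using c3 kp by (metis mult.commute mult.left_commute mult_le_cancel_left_pos)
    then have ex: "ln (real k) + real k - c * (real k * ln (real k)) \<le> - real k" using lk by linarith
    have "exp (ln (real k) + real k - c * (real k * ln (real k))) \<le> exp (- real k)" using ex by simp
    also have "\<dots> = inverse (exp (real k))" by (simp add: exp_minus)
    also have "\<dots> \<le> inverse (real k)"
    proof -
      have "real k \<le> exp (real k)" using exp_ge_add_one_self[of "real k"] by linarith
      then show ?thesis using kp by (intro le_imp_inverse_le) auto
    qed
    finally have e: "exp (ln (real k) + real k - c * (real k * ln (real k))) \<le> inverse (real k)" .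
    have "real (card (Dset n k)) / real (card (Cset n k)) \<le> b * exp (ln (real k) + real k - c * (real k * ln (real k)))"
      using ratio_bound[OF n k] unfolding b_def c_def B_def by simp
    also have "\<dots> \<le> b * inverse (real k)" using e b3 by (intro mult_left_mono) auto
    finally show "real (card (Dset n k)) / real (card (Cset n k)) \<le> b / real k" by (simp add: divide_inverse)
  qed
  have ev0: "eventually (\<lambda>k. 0 \<le> real (card (Dset n k)) / real (card (Cset n k))) sequentially" by simp
  have lim: "(\<lambda>k. b / real k) \<longlonglongrightarrow> 0" by (rule lim_const_over_n)
  show ?thesis by (rule tendsto_sandwich[OF ev0 ev tendsto_const lim])
qed


end
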